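(* Let $S$ be a finite set, let $\sigma\in\mathrm{Perm}(S)$, and let $\tau,\tau'\in\mathrm{Perm}(S)$ have disjoint supports. Then: (1) $(\sigma\setminus\tau)^{-1}=\sigma^{-1}\setminus\tau^{-1}$; (2) $(\sigma\setminus\tau)\setminus\tau'=\sigma\setminus(\tau\tau')=(\sigma\setminus\tau')\setminus\tau$; (3) two elements $(i,k),(i',k')\in\{0,1\}\times(S\setminus\mathrm{supp}(\tau))$ lie in the same cycle of $\tau'\tau\bowtie\sigma$ if and only if they lie in the same cycle of $\tau'\bowtie(\sigma\setminus\tau)$ (where $\tau'$ is regarded as a permutation of $S\setminus\mathrm{supp}(\tau)$, which it preserves).
   Context: $\mathrm{Perm}(S)$ denotes permutations of $S$ and $\mathrm{supp}(\sigma)=\{k:\sigma(k)\neq k\}$. For $\sigma,\tau\in\mathrm{Perm}(S)$, $\sigma\setminus\tau\in\mathrm{Perm}(S\setminus\mathrm{supp}(\tau))$ is defined by $(\sigma\setminus\tau)(k)=(\tau\sigma)^{r(k)}(k)$, where $r(k)\ge1$ is the smallest integer with $(\tau\sigma)^{r(k)}(k)\notin\mathrm{supp}(\tau)$. For $\pi,\sigma\in\mathrm{Perm}(S)$, $\pi\bowtie\sigma\in\mathrm{Perm}(\{0,1\}\times S)$ is given by $(0,k)\mapsto(1,\sigma(k))$ and $(1,k)\mapsto(0,\pi(k))$. *)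

theory Defs
  imports "HOL-Combinatorics.Permutations"
begin

definition supp :: "('a \<Rightarrow> 'a) \<Rightarrow> 'a set" where
  "supp \<sigma> = {k. \<sigma> k \<noteq> k}"

text \<open>sigma minus tau, a permutation of S - supp tau, extended by the identity
  (on supp tau and outside S).  Composition tau sigma means tau after sigma.\<close>
definition perm_minus :: "('a \<Rightarrow> 'a) \<Rightarrow> ('a \<Rightarrow> 'a) \<Rightarrow> ('a \<Rightarrow> 'a)" where
  "perm_minus \<sigma> \<tau> k =
     (if k \<in> supp \<tau> then k
      else ((\<tau> \<circ> \<sigma>) ^^ (LEAST r. r \<ge> 1 \<and> ((\<tau> \<circ> \<sigma>) ^^ r) k \<notin> supp \<tau>)) k)"

text \<open>pi bowtie sigma on {0,1} x S, with 0 encoded as False and 1 as True: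
  (0,k) -> (1, sigma k), (1,k) -> (0, pi k).\<close>
definition bowtie :: "('a \<Rightarrow> 'a) \<Rightarrow> ('a \<Rightarrow> 'a) \<Rightarrow> (bool \<times> 'a \<Rightarrow> bool \<times> 'a)" where
  "bowtie \<pi> \<sigma> = (\<lambda>(i, k). if i then (False, \<pi> k) else (True, \<sigma> k))"

definition same_cycle :: "('b \<Rightarrow> 'b) \<Rightarrow> 'b \<Rightarrow> 'b \<Rightarrow> bool" where
  "same_cycle f x y \<longleftrightarrow> (\<exists>n. (f ^^ n) x = y)"

end

theory Submission
  imports Defs "HOL-Combinatorics.Cycles"
begin

definition ret :: "('a \<Rightarrow> 'a) \<Rightarrow> 'a set \<Rightarrow> 'a \<Rightarrow> 'a" where
  "ret h A x = (h ^^ (LEAST r. r \<ge> 1 \<and> (h ^^ r) x \<in> A)) x"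

lemma perm_minus_ret: "perm_minus \<sigma> \<tau> k = (if k \<in> supp \<tau> then k else ret (\<tau> \<circ> \<sigma>) (- supp \<tau>) k)"
  unfolding perm_minus_def ret_def by simp

lemma ret_char:
  assumes "r \<ge> 1" "(h ^^ r) x \<in> A" "\<And>j. 0 < j \<Longrightarrow> j < r \<Longrightarrow> (h ^^ j) x \<notin> A"
  shows "ret h A x = (h ^^ r) x"
proof -
  have "(LEAST r. r \<ge> 1 \<and> (h ^^ r) x \<in> A) = r"
    by (rule Least_equality) (use assms in \<open>auto simp: not_le intro: ccontr\<close>)
  thus ?thesis unfolding ret_def by simp
qed

lemma ret_exists:
  assumes "n \<ge> 1" "(h ^^ n) x \<in> A"
  obtains r where "r \<ge> 1" "r \<le> n" "(h ^^ r) x \<in> A" "\<And>j. 0 < j \<Longrightarrow> j < r \<Longrightarrow> (h ^^ j) x \<notin> A"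
    "ret h A x = (h ^^ r) x"
proof -
  let ?r = "LEAST r. r \<ge> 1 \<and> (h ^^ r) x \<in> A"
  have 1: "?r \<ge> 1 \<and> (h ^^ ?r) x \<in> A" by (rule LeastI[of _ n]) (use assms in auto)
  have 2: "?r \<le> n" by (rule Least_le) (use assms in auto)
  have 3: "(h ^^ j) x \<notin> A" if "0 < j" "j < ?r" for j
    using not_less_Least[OF that(2)] that(1) by auto
  show ?thesis by (rule that[of ?r]) (use 1 2 3 in \<open>auto simp: ret_def\<close>)
qed

lemma perm_periodic:
  assumes "finite S" "h permutes S"
  obtains n where "n \<ge> 1" "h ^^ n = id"
proof -
  have "permutation h" using assms permutation_permutes by blast
  from permutation_is_nilpotent[OF this] obtain n where "h ^^ n = id" "n > 0" .
  thus ?thesis by (intro that[of n]) auto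
qed

lemma ret_perm:
  assumes "finite S" "h permutes S" "x \<in> A"
  obtains r where "r \<ge> 1" "(h ^^ r) x \<in> A" "\<And>j. 0 < j \<Longrightarrow> j < r \<Longrightarrow> (h ^^ j) x \<notin> A"
    "ret h A x = (h ^^ r) x"
proof -
  obtain n where "n \<ge> 1" "h ^^ n = id" using perm_periodic assms by blast
  then have "(h ^^ n) x \<in> A" using assms by simp
  from ret_exists[OF \<open>n \<ge> 1\<close> this] show ?thesis using that by metis
qed

lemma ret_in:
  assumes "finite S" "h permutes S" "x \<in> A"
  shows "ret h A x \<in> A"
  using ret_perm[OF assms] by metis

lemma ret_is_pow: "\<exists>N. (ret h A ^^ m) x = (h ^^ N) x"
proof (induction m arbitrary: x)
  case 0 then show ?case by (metis funpow_0)
next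
  case (Suc m)
  obtain N where "(ret h A ^^ m) (ret h A x) = (h ^^ N) (ret h A x)" using Suc by blast
  moreover obtain r where "ret h A x = (h ^^ r) x" unfolding ret_def by blast
  ultimately show ?case by (metis funpow_Suc_right o_apply funpow_add)
qed

lemma pow_to_ret:
  assumes "x \<in> A" "(h ^^ n) x = y" "y \<in> A"
  shows "\<exists>m. (ret h A ^^ m) x = y"
  using assms
proof (induction n arbitrary: x rule: less_induct)
  case (less n)
  show ?case
  proof (cases "n = 0")
    case True then show ?thesis using less by (metis funpow_0)
  next
    case False
    then obtain r where r: "r \<ge> 1" "r \<le> n" "ret h A x = (h ^^ r) x"
      using ret_exists[of n h x A] less by (metis less_one not_le)
    have "(h ^^ (n - r)) (ret h A x) = y" using r less(3)
      by (metis funpow_add le_add_diff_inverse2 o_apply)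
    moreover have "ret h A x \<in> A" using ret_exists[of n h x A] less False r
      by (metis One_nat_def Suc_leI neq0_conv)
    ultimately obtain m where "(ret h A ^^ m) (ret h A x) = y"
      using less(1)[of "n - r" "ret h A x"] r less by auto
    then show ?thesis by (metis funpow_Suc_right o_apply)
  qed
qed

lemma ret_nested:
  assumes "A' \<subseteq> A" "x \<in> A" "t \<ge> 1" "(h ^^ t) x \<in> A'" "\<And>j. 0 < j \<Longrightarrow> j < t \<Longrightarrow> (h ^^ j) x \<notin> A'"
  shows "\<exists>m\<ge>1. (ret h A ^^ m) x = (h ^^ t) x \<and> (\<forall>i. 0 < i \<and> i < m \<longrightarrow> (ret h A ^^ i) x \<notin> A')"
  using assms(2-)
proof (induction t arbitrary: x rule: less_induct)
  case (less t)
  have tA: "(h ^^ t) x \<in> A" using less assms(1) by auto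
  obtain r where r: "r \<ge> 1" "r \<le> t" "(h ^^ r) x \<in> A" "ret h A x = (h ^^ r) x"
    using ret_exists[OF less(3) tA] by metis
  show ?case
  proof (cases "r = t")
    case True then show ?thesis using r by (intro exI[of _ 1]) auto
  next
    case False
    let ?x1 = "ret h A x"
    have x1A': "?x1 \<notin> A'" using less(5)[of r] r False by auto
    have e: "(h ^^ j) ?x1 = (h ^^ (j + r)) x" for j using r(4) by (simp add: funpow_add)
    have "\<exists>m\<ge>1. (ret h A ^^ m) ?x1 = (h ^^ (t - r)) ?x1 \<and> (\<forall>i. 0 < i \<and> i < m \<longrightarrow> (ret h A ^^ i) ?x1 \<notin> A')"
      apply (rule less(1))
      using r False less e by auto
    then obtain m where m: "m \<ge> 1" "(ret h A ^^ m) ?x1 = (h ^^ (t - r)) ?x1"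
      "\<And>i. 0 < i \<Longrightarrow> i < m \<Longrightarrow> (ret h A ^^ i) ?x1 \<notin> A'" by blast
    have "(ret h A ^^ Suc m) x = (ret h A ^^ m) ?x1" by (simp only: funpow_Suc_right o_apply)
    also have "\<dots> = (h ^^ t) x" using m(2) e r by simp
    finally have "(ret h A ^^ Suc m) x = (h ^^ t) x" .
    moreover have "(ret h A ^^ i) x \<notin> A'" if "0 < i" "i < Suc m" for i
    proof (cases "i = 1")
      case True then show ?thesis using x1A' by simp
    next
      case False
      then have "(ret h A ^^ i) x = (ret h A ^^ (i - 1)) ?x1"
        using that by (metis Suc_diff_1 funpow_Suc_right o_apply)
      then show ?thesis using m(3)[of "i - 1"] that False by auto
    qed
    ultimately show ?thesis by (intro exI[of _ "Suc m"]) auto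
  qed
qed

lemma ret_nested_eq:
  assumes "finite S" "h permutes S" "A' \<subseteq> A" "x \<in> A'"
  shows "ret (ret h A) A' x = ret h A' x"
proof -
  obtain t where t: "t \<ge> 1" "(h ^^ t) x \<in> A'" "\<And>j. 0 < j \<Longrightarrow> j < t \<Longrightarrow> (h ^^ j) x \<notin> A'"
    "ret h A' x = (h ^^ t) x" using ret_perm[OF assms(1,2,4)] by metis
  obtain m where m: "m \<ge> 1" "(ret h A ^^ m) x = (h ^^ t) x" "\<forall>i. 0 < i \<and> i < m \<longrightarrow> (ret h A ^^ i) x \<notin> A'"
    using ret_nested[OF assms(3) _ t(1-3)] assms by blast
  have "ret (ret h A) A' x = (ret h A ^^ m) x"
    by (rule ret_char) (use m t in auto)
  then show ?thesis using m t by simp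
qed

lemma ret_cong:
  assumes "\<And>n. (g1 ^^ n) x = (g2 ^^ n) x" "\<And>n. n \<ge> 1 \<Longrightarrow> (g1 ^^ n) x \<in> B1 \<longleftrightarrow> (g1 ^^ n) x \<in> B2"
  shows "ret g1 B1 x = ret g2 B2 x"
proof -
  have "(\<lambda>r. r \<ge> 1 \<and> (g1 ^^ r) x \<in> B1) = (\<lambda>r. r \<ge> 1 \<and> (g2 ^^ r) x \<in> B2)"
    using assms by (auto simp del: funpow.simps)
  then show ?thesis unfolding ret_def using assms(1) by simp
qed

lemma iter_agree:
  assumes "\<And>y. y \<in> A \<Longrightarrow> g1 y = g2 y" "\<And>y. y \<in> A \<Longrightarrow> g2 y \<in> A" "x \<in> A"
  shows "(g1 ^^ n) x = (g2 ^^ n) x \<and> (g2 ^^ n) x \<in> A"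
  by (induction n) (use assms in auto)

lemma inv_pow:
  fixes h :: "'a \<Rightarrow> 'a"
  assumes "bij h"
  shows "(inv h ^^ j) ((h ^^ j) z) = z"
proof (induction j)
  case 0 show ?case by simp
next
  case (Suc j)
  have "(inv h ^^ Suc j) ((h ^^ Suc j) z) = (inv h ^^ j) (inv h (h ((h ^^ j) z)))"
    by (subst funpow_Suc_right[of j "inv h"], subst funpow.simps(2), simp only: o_apply)
  also have "\<dots> = z" using Suc assms by (simp add: bij_is_inj)
  finally show ?case .
qed

lemma ret_inv:
  assumes "finite S" "h permutes S" "x \<in> A"
  shows "ret (inv h) A (ret h A x) = x"
proof -
  obtain r where r: "r \<ge> 1" "(h ^^ r) x \<in> A" "\<And>j. 0 < j \<Longrightarrow> j < r \<Longrightarrow> (h ^^ j) x \<notin> A"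
    "ret h A x = (h ^^ r) x" using ret_perm[OF assms] by metis
  have b: "bij h" using assms permutes_bij by blast
  have e: "(inv h ^^ j) ((h ^^ r) x) = (h ^^ (r - j)) x" if "j \<le> r" for j
  proof -
    have "(h ^^ r) x = (h ^^ j) ((h ^^ (r - j)) x)" using that
      by (metis funpow_add le_add_diff_inverse o_apply)
    then show ?thesis using inv_pow[OF b] by simp
  qed
  have "ret (inv h) A ((h ^^ r) x) = (inv h ^^ r) ((h ^^ r) x)"
    by (rule ret_char) (use r e assms in auto)
  then show ?thesis using r e by simp
qed

lemma supp_perm:
  assumes "\<tau> permutes S"
  shows "\<tau> x \<in> supp \<tau> \<longleftrightarrow> x \<in> supp \<tau>"
  using assms unfolding supp_def by (auto dest: permutes_inj injD)

lemma supp_inv: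
  assumes "\<tau> permutes S"
  shows "supp (inv \<tau>) = supp \<tau>"
  using assms unfolding supp_def by (auto simp: permutes_inv_eq)

lemma conj_pow: "((a \<circ> b) ^^ m) (a z) = a (((b \<circ> a) ^^ m) z)"
  by (induction m) auto

lemma part1:
  assumes "finite S" "\<sigma> permutes S" "\<tau> permutes S"
  shows "inv (perm_minus \<sigma> \<tau>) = perm_minus (inv \<sigma>) (inv \<tau>)"
proof -
  define h where "h = \<tau> \<circ> \<sigma>"
  define A where "A = - supp \<tau>"
  have hp: "h permutes S" unfolding h_def using assms permutes_compose by blast
  have ihp: "inv h permutes S" using hp permutes_inv by blast
  have ih: "inv h = inv \<sigma> \<circ> inv \<tau>" unfolding h_def
    using assms o_inv_distrib permutes_bij by blast
  have itA: "inv \<tau> z \<in> A \<longleftrightarrow> z \<in> A" for z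
    using supp_perm[OF permutes_inv[OF assms(3)], of z] supp_inv[OF assms(3)] unfolding A_def by auto
  have itfix: "inv \<tau> z = z" if "z \<in> A" for z
    using that supp_inv[OF assms(3)] unfolding A_def supp_def by auto
  have key: "perm_minus (inv \<sigma>) (inv \<tau>) j = ret (inv h) A j" if jA: "j \<in> A" for j
  proof -
    have pw: "((inv \<tau> \<circ> inv \<sigma>) ^^ i) j = inv \<tau> ((inv h ^^ i) j)" for i
      using conj_pow[where a="inv \<tau>" and b="inv \<sigma>" and m=i and z=j] itfix[OF jA] ih by simp
    obtain r where r: "r \<ge> 1" "(inv h ^^ r) j \<in> A" "\<And>i. 0 < i \<Longrightarrow> i < r \<Longrightarrow> (inv h ^^ i) j \<notin> A"
      "ret (inv h) A j = (inv h ^^ r) j" using ret_perm[OF assms(1) ihp jA] by metis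
    have "ret (inv \<tau> \<circ> inv \<sigma>) A j = ((inv \<tau> \<circ> inv \<sigma>) ^^ r) j"
      by (rule ret_char) (use r pw itA in auto)
    then show ?thesis using that r pw itfix supp_inv[OF assms(3)]
      unfolding perm_minus_ret A_def by auto
  qed
  have f: "perm_minus \<sigma> \<tau> j = (if j \<in> A then ret h A j else j)" for j
    unfolding perm_minus_ret A_def h_def by auto
  have g: "perm_minus (inv \<sigma>) (inv \<tau>) j = (if j \<in> A then ret (inv h) A j else j)" for j
    using key supp_inv[OF assms(3)] unfolding perm_minus_ret A_def by auto
  have "inv h ^^ 0 = id" by simp
  have iih: "inv (inv h) = h" using hp permutes_inv_inv by blast
  have 1: "perm_minus \<sigma> \<tau> (perm_minus (inv \<sigma>) (inv \<tau>) j) = j" for j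
    using ret_inv[OF assms(1) ihp, of j A] ret_in[OF assms(1) ihp, of j A] iih
    unfolding f g by auto
  have 2: "perm_minus (inv \<sigma>) (inv \<tau>) (perm_minus \<sigma> \<tau> j) = j" for j
    using ret_inv[OF assms(1) hp, of j A] ret_in[OF assms(1) hp, of j A]
    unfolding f g by auto
  show ?thesis by (rule inv_unique_comp) (use 1 2 in auto)
qed

lemma disj_fix:
  assumes "supp \<tau> \<inter> supp \<tau>' = {}" "y \<in> supp \<tau>"
  shows "\<tau>' y = y"
  using assms unfolding supp_def by auto

lemma decomp:
  assumes "finite S" "\<sigma> permutes S" "\<tau> permutes S" "\<tau>' permutes S"
    and "supp \<tau> \<inter> supp \<tau>' = {}" and xA: "x \<in> - supp \<tau>"
  shows "ret (\<tau> \<circ> \<tau>' \<circ> \<sigma>) (- supp \<tau>) x = \<tau>' (ret (\<tau> \<circ> \<sigma>) (- supp \<tau>) x)"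
proof -
  define k where "k = \<tau> \<circ> \<sigma>"
  define h where "h = \<tau> \<circ> \<tau>' \<circ> \<sigma>"
  define A where "A = - supp \<tau>"
  have kp: "k permutes S" unfolding k_def using assms permutes_compose by blast
  obtain r where r: "r \<ge> 1" "(k ^^ r) x \<in> A" "\<And>j. 0 < j \<Longrightarrow> j < r \<Longrightarrow> (k ^^ j) x \<notin> A"
    "ret k A x = (k ^^ r) x" using ret_perm[OF assms(1) kp, of x A] xA unfolding A_def by metis
  have same: "(h ^^ j) x = (k ^^ j) x" if "j < r" for j
    using that
  proof (induction j)
    case 0 then show ?case by simp
  next
    case (Suc j)
    have "(k ^^ Suc j) x \<in> supp \<tau>" using r(3)[of "Suc j"] Suc unfolding A_def by auto
    then have "\<tau> (\<sigma> ((k ^^ j) x)) \<in> supp \<tau>" unfolding k_def by simp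
    then have "\<sigma> ((k ^^ j) x) \<in> supp \<tau>" using supp_perm[OF assms(3)] by blast
    then have tf: "\<tau>' (\<sigma> ((k ^^ j) x)) = \<sigma> ((k ^^ j) x)" using disj_fix[OF assms(5)] by blast
    have IH: "(h ^^ j) x = (k ^^ j) x" using Suc by simp
    have "(h ^^ Suc j) x = h ((k ^^ j) x)" using IH by simp
    also have "\<dots> = \<tau> (\<tau>' (\<sigma> ((k ^^ j) x)))" unfolding h_def by simp
    also have "\<dots> = k ((k ^^ j) x)" using tf unfolding k_def by simp
    finally show ?case by simp
  qed
  have last: "(h ^^ r) x = \<tau>' ((k ^^ r) x)"
  proof -
    obtain q where q: "r = Suc q" using r(1) by (cases r) auto
    define z where "z = \<sigma> ((k ^^ q) x)"
    have kr: "(k ^^ r) x = \<tau> z" unfolding q z_def k_def by simp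
    have "z \<notin> supp \<tau>" using r(2) kr supp_perm[OF assms(3), of z] unfolding A_def by auto
    then have tz: "\<tau> z = z" unfolding supp_def by auto
    have "\<tau>' z \<notin> supp \<tau>"
    proof (cases "z \<in> supp \<tau>'")
      case True then show ?thesis using supp_perm[OF assms(4), of z] assms(5) by auto
    next
      case False then show ?thesis using \<open>z \<notin> supp \<tau>\<close> unfolding supp_def by auto
    qed
    then have "\<tau> (\<tau>' z) = \<tau>' z" unfolding supp_def by auto
    moreover have "(h ^^ r) x = \<tau> (\<tau>' z)"
    proof -
      have "(h ^^ r) x = h ((h ^^ q) x)" unfolding q by simp
      also have "\<dots> = h ((k ^^ q) x)" using same[of q] q by simp
      finally show ?thesis unfolding z_def h_def by simp
    qed
    ultimately show ?thesis using kr tz by simp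
  qed
  have hrA: "(h ^^ r) x \<in> A"
  proof -
    have "(k ^^ r) x \<in> A" by (rule r(2))
    then show ?thesis using last disj_fix[OF assms(5)] supp_perm[OF assms(4)] unfolding A_def supp_def
      by (metis ComplD ComplI assms(5) disjoint_iff mem_Collect_eq supp_def)
  qed
  have "ret h A x = (h ^^ r) x"
  proof (rule ret_char)
    show "(h ^^ j) x \<notin> A" if "0 < j" "j < r" for j using r(3)[OF that] same[OF that(2)] by simp
  qed (use r hrA in auto)
  moreover note hrA
  ultimately show ?thesis using r last unfolding h_def k_def A_def by simp
qed

lemma supp_comp:
  assumes "\<tau> permutes S" "\<tau>' permutes S" "supp \<tau> \<inter> supp \<tau>' = {}"
  shows "supp (\<tau> \<circ> \<tau>') = supp \<tau> \<union> supp \<tau>'"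
proof -
  have "x \<in> supp (\<tau> \<circ> \<tau>') \<longleftrightarrow> x \<in> supp \<tau> \<union> supp \<tau>'" for x
  proof (cases "x \<in> supp \<tau>")
    case True then show ?thesis using disj_fix[OF assms(3) True] unfolding supp_def by auto
  next
    case False
    then have tx: "\<tau> x = x" unfolding supp_def by auto
    show ?thesis
    proof (cases "x \<in> supp \<tau>'")
      case True
      then have "\<tau>' x \<in> supp \<tau>'" using supp_perm[OF assms(2)] by blast
      then have "\<tau> (\<tau>' x) = \<tau>' x" using assms(3) unfolding supp_def by auto
      then show ?thesis using True unfolding supp_def by auto
    next
      case F2: False
      then show ?thesis using False tx unfolding supp_def by auto
    qed
  qed
  then show ?thesis by blast
qed

lemma disj_commute:
  assumes "\<tau> permutes S" "\<tau>' permutes S" "supp \<tau> \<inter> supp \<tau>' = {}"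
  shows "\<tau> \<circ> \<tau>' = \<tau>' \<circ> \<tau>"
proof
  fix x
  show "(\<tau> \<circ> \<tau>') x = (\<tau>' \<circ> \<tau>) x"
  proof (cases "x \<in> supp \<tau>")
    case True
    then have "\<tau> x \<in> supp \<tau>" using supp_perm[OF assms(1)] by blast
    then show ?thesis using True disj_fix[OF assms(3)] by simp
  next
    case False
    then have tx: "\<tau> x = x" unfolding supp_def by auto
    show ?thesis
    proof (cases "x \<in> supp \<tau>'")
      case True
      then have "\<tau>' x \<in> supp \<tau>'" using supp_perm[OF assms(2)] by blast
      then have "\<tau> (\<tau>' x) = \<tau>' x" using assms(3) unfolding supp_def by auto
      then show ?thesis using tx by simp
    next
      case F2: False
      then show ?thesis using tx unfolding supp_def by auto
    qed
  qed
qed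

lemma part2:
  assumes "finite S" "\<sigma> permutes S" "\<tau> permutes S" "\<tau>' permutes S"
    and "supp \<tau> \<inter> supp \<tau>' = {}"
  shows "perm_minus (perm_minus \<sigma> \<tau>) \<tau>' = perm_minus \<sigma> (\<tau> \<circ> \<tau>')"
proof
  fix x
  define f where "f = perm_minus \<sigma> \<tau>"
  define k where "k = \<tau> \<circ> \<sigma>"
  define h where "h = \<tau> \<circ> \<tau>' \<circ> \<sigma>"
  define A where "A = - supp \<tau>"
  define A' where "A' = - supp \<tau>'"
  have kp: "k permutes S" unfolding k_def using assms permutes_compose by blast
  have hp: "h permutes S" unfolding h_def using assms permutes_compose by blast
  have sc: "supp (\<tau> \<circ> \<tau>') = supp \<tau> \<union> supp \<tau>'" using supp_comp assms by blast
  have fA: "f y = (if y \<in> A then ret k A y else y)" for y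
    unfolding f_def perm_minus_ret A_def k_def by auto
  show "perm_minus f \<tau>' x = perm_minus \<sigma> (\<tau> \<circ> \<tau>') x"
  proof (cases "x \<in> supp \<tau>'")
    case True then show ?thesis unfolding perm_minus_ret sc by auto
  next
    case nt': False
    show ?thesis
    proof (cases "x \<in> supp \<tau>")
      case True
      have "ret (\<tau>' \<circ> f) (- supp \<tau>') x = ((\<tau>' \<circ> f) ^^ 1) x"
        by (rule ret_char) (use True nt' fA in \<open>auto simp: A_def supp_def\<close>)
      then show ?thesis using True nt' fA unfolding perm_minus_ret sc by (auto simp: A_def supp_def)
    next
      case nt: False
      have xA: "x \<in> A \<inter> A'" using nt nt' unfolding A_def A'_def by auto
      have rhs: "perm_minus \<sigma> (\<tau> \<circ> \<tau>') x = ret h (A \<inter> A') x"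
        using nt nt' unfolding perm_minus_ret sc h_def A_def A'_def by (simp add: o_assoc)
      have n1: "ret h (A \<inter> A') x = ret (ret h A) (A \<inter> A') x"
        using ret_nested_eq[OF assms(1) hp, of "A \<inter> A'" A x] xA by auto
      have ag: "(\<tau>' \<circ> f) y = ret h A y" if "y \<in> A" for y
        using decomp[OF assms, of y] that fA unfolding h_def k_def A_def by simp
      have pr: "ret h A y \<in> A" if "y \<in> A" for y using ret_in[OF assms(1) hp that] .
      have it: "((\<tau>' \<circ> f) ^^ n) x = (ret h A ^^ n) x \<and> (ret h A ^^ n) x \<in> A" for n
        by (rule iter_agree[of A]) (use ag pr xA in auto)
      have "ret (\<tau>' \<circ> f) A' x = ret (ret h A) (A \<inter> A') x"
        by (rule ret_cong) (use it in auto)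
      then show ?thesis using rhs n1 nt' unfolding perm_minus_ret A'_def by simp
    qed
  qed
qed

lemma bowtie_T[simp]: "bowtie \<pi> \<sigma> (True, k) = (False, \<pi> k)"
  and bowtie_F[simp]: "bowtie \<pi> \<sigma> (False, k) = (True, \<sigma> k)"
  unfolding bowtie_def by auto

lemma tau'_pres:
  assumes "\<tau>' permutes S" "supp \<tau> \<inter> supp \<tau>' = {}" "k \<notin> supp \<tau>"
  shows "\<tau>' k \<notin> supp \<tau>"
proof (cases "k \<in> supp \<tau>'")
  case True then show ?thesis using supp_perm[OF assms(1), of k] assms(2) by auto
next
  case False then show ?thesis using assms(3) unfolding supp_def by auto
qed

lemma part3_ret:
  assumes "finite S" "\<sigma> permutes S" "\<tau> permutes S" "\<tau>' permutes S"
    and "supp \<tau> \<inter> supp \<tau>' = {}" and pB: "p \<in> {p. snd p \<notin> supp \<tau>}"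
  shows "ret (bowtie (\<tau>' \<circ> \<tau>) \<sigma>) {p. snd p \<notin> supp \<tau>} p = bowtie \<tau>' (perm_minus \<sigma> \<tau>) p
     \<and> bowtie \<tau>' (perm_minus \<sigma> \<tau>) p \<in> {p. snd p \<notin> supp \<tau>}"
proof -
  define F where "F = bowtie (\<tau>' \<circ> \<tau>) \<sigma>"
  define G where "G = bowtie \<tau>' (perm_minus \<sigma> \<tau>)"
  define B where "B = {p :: bool \<times> _. snd p \<notin> supp \<tau>}"
  define k0 where "k0 = \<tau> \<circ> \<sigma>"
  define A where "A = - supp \<tau>"
  have k0p: "k0 permutes S" unfolding k0_def using assms permutes_compose by blast
  obtain i k where p: "p = (i, k)" by (cases p)
  have kA: "k \<notin> supp \<tau>" using pB p by simp
  then have tk: "\<tau> k = k" unfolding supp_def by auto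
  show ?thesis
  proof (cases i)
    case True
    have FT: "F p = (False, \<tau>' k)" using True tk unfolding F_def p by simp
    have inB: "(False, \<tau>' k) \<in> B" unfolding B_def using tau'_pres[OF assms(4,5) kA] by simp
    have "ret F B p = (F ^^ 1) p" by (rule ret_char) (use FT inB in auto)
    then show ?thesis using FT inB True unfolding F_def G_def B_def p by simp
  next
    case False
    obtain r where r: "r \<ge> 1" "(k0 ^^ r) k \<in> A" "\<And>j. 0 < j \<Longrightarrow> j < r \<Longrightarrow> (k0 ^^ j) k \<notin> A"
      "ret k0 A k = (k0 ^^ r) k" using ret_perm[OF assms(1) k0p, of k A] kA unfolding A_def by auto
    have Gp: "G p = (True, (k0 ^^ r) k)"
      using False unfolding G_def p using r kA unfolding perm_minus_ret k0_def A_def by simp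
    have it: "(F ^^ (2 * j)) p = (False, (k0 ^^ j) k) \<and> (F ^^ (2 * j + 1)) p = (True, \<sigma> ((k0 ^^ j) k))"
      if "j < r" for j
      using that
    proof (induction j)
      case 0 then show ?case using False unfolding p F_def by simp
    next
      case (Suc j)
      have jr: "j < r" using Suc.prems by simp
      from Suc.IH[OF jr] have IH: "(F ^^ (2 * j + 1)) p = (True, \<sigma> ((k0 ^^ j) k))" by blast
      have ins: "(k0 ^^ Suc j) k \<in> supp \<tau>" using r(3)[of "Suc j"] Suc unfolding A_def by auto
      have e1: "(F ^^ (2 * Suc j)) p = F ((F ^^ (2 * j + 1)) p)" by simp
      also have "\<dots> = F (True, \<sigma> ((k0 ^^ j) k))" by (simp only: IH)
      also have "\<dots> = (False, \<tau>' ((k0 ^^ Suc j) k))" unfolding F_def k0_def by simp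
      also have "\<dots> = (False, (k0 ^^ Suc j) k)" using disj_fix[OF assms(5) ins] by simp
      finally have a: "(F ^^ (2 * Suc j)) p = (False, (k0 ^^ Suc j) k)" .
      have "(F ^^ (2 * Suc j + 1)) p = F ((F ^^ (2 * Suc j)) p)" by simp
      also have "\<dots> = F (False, (k0 ^^ Suc j) k)" by (simp only: a)
      also have "\<dots> = (True, \<sigma> ((k0 ^^ Suc j) k))" unfolding F_def by simp
      finally show ?case using a by simp
    qed
    obtain q where q: "r = Suc q" using r(1) by (cases r) auto
    define z where "z = \<sigma> ((k0 ^^ q) k)"
    have kr: "(k0 ^^ r) k = \<tau> z" unfolding q z_def k0_def by simp
    have "z \<notin> supp \<tau>" using r(2) kr supp_perm[OF assms(3), of z] unfolding A_def by auto
    then have tz: "\<tau> z = z" unfolding supp_def by auto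
    have "(F ^^ (2 * q + 1)) p = (True, z)" using it[of q] q unfolding z_def by blast
    then have Ft: "(F ^^ (2 * q + 1)) p = G p" using Gp kr tz by simp
    have GB: "G p \<in> B" using Gp r(2) unfolding B_def A_def by simp
    have "ret F B p = (F ^^ (2 * q + 1)) p"
    proof (rule ret_char)
      show "(F ^^ j) p \<notin> B" if "0 < j" "j < 2 * q + 1" for j
      proof (cases "even j")
        case True
        then obtain i where j: "j = 2 * i" by blast
        then have "0 < i" "i < r" using that q by auto
        then show ?thesis using it[of i] r(3)[of i] j unfolding B_def A_def by auto
      next
        case False
        then obtain i where j: "j = 2 * i + 1" using oddE by blast
        then have ir: "Suc i < r" using that q by auto
        have "(k0 ^^ Suc i) k \<in> supp \<tau>" using r(3)[of "Suc i"] ir unfolding A_def by auto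
        then have "\<tau> (\<sigma> ((k0 ^^ i) k)) \<in> supp \<tau>" unfolding k0_def by simp
        then have "\<sigma> ((k0 ^^ i) k) \<in> supp \<tau>" using supp_perm[OF assms(3)] by blast
        then show ?thesis using it[of i] ir j unfolding B_def by auto
      qed
    qed (use Ft GB in auto)
    then show ?thesis using Ft GB unfolding F_def G_def B_def by simp
  qed
qed

lemma part3:
  assumes "finite S" "\<sigma> permutes S" "\<tau> permutes S" "\<tau>' permutes S"
    and "supp \<tau> \<inter> supp \<tau>' = {}" and "k \<in> S - supp \<tau>" "k' \<in> S - supp \<tau>"
  shows "same_cycle (bowtie (\<tau>' \<circ> \<tau>) \<sigma>) (i, k) (i', k')
            \<longleftrightarrow> same_cycle (bowtie \<tau>' (perm_minus \<sigma> \<tau>)) (i, k) (i', k')"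
proof -
  define F where "F = bowtie (\<tau>' \<circ> \<tau>) \<sigma>"
  define G where "G = bowtie \<tau>' (perm_minus \<sigma> \<tau>)"
  define B where "B = {p :: bool \<times> _. snd p \<notin> supp \<tau>}"
  have R: "ret F B y = G y" "G y \<in> B" if "y \<in> B" for y
    using part3_ret[OF assms(1-5) that[unfolded B_def]] unfolding F_def G_def B_def by auto
  have pB: "(i, k) \<in> B" and qB: "(i', k') \<in> B" using assms(6,7) unfolding B_def by auto
  have ag: "(ret F B ^^ m) (i, k) = (G ^^ m) (i, k)" for m
    using iter_agree[of B "ret F B" G "(i, k)" m] R pB by auto
  show ?thesis unfolding F_def[symmetric] G_def[symmetric]
  proof
    assume "same_cycle F (i, k) (i', k')"
    then obtain n where "(F ^^ n) (i, k) = (i', k')" unfolding same_cycle_def by blast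
    then obtain m where "(ret F B ^^ m) (i, k) = (i', k')" using pow_to_ret[OF pB _ qB] by blast
    then show "same_cycle G (i, k) (i', k')" unfolding same_cycle_def using ag by metis
  next
    assume "same_cycle G (i, k) (i', k')"
    then obtain m where "(G ^^ m) (i, k) = (i', k')" unfolding same_cycle_def by blast
    then have "(ret F B ^^ m) (i, k) = (i', k')" using ag by simp
    then show "same_cycle F (i, k) (i', k')" unfolding same_cycle_def using ret_is_pow by metis
  qed
qed

theorem lemma3p16:
  fixes S :: "'a set" and \<sigma> \<tau> \<tau>' :: "'a \<Rightarrow> 'a"
  assumes "finite S"
    and "\<sigma> permutes S" and "\<tau> permutes S" and "\<tau>' permutes S"
    and "supp \<tau> \<inter> supp \<tau>' = {}"
  shows "inv (perm_minus \<sigma> \<tau>) = perm_minus (inv \<sigma>) (inv \<tau>)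
    \<and> (perm_minus (perm_minus \<sigma> \<tau>) \<tau>' = perm_minus \<sigma> (\<tau> \<circ> \<tau>')
       \<and> perm_minus \<sigma> (\<tau> \<circ> \<tau>') = perm_minus (perm_minus \<sigma> \<tau>') \<tau>)
    \<and> (\<forall>i k i' k'. k \<in> S - supp \<tau> \<longrightarrow> k' \<in> S - supp \<tau> \<longrightarrow>
           (same_cycle (bowtie (\<tau>' \<circ> \<tau>) \<sigma>) (i, k) (i', k')
            \<longleftrightarrow> same_cycle (bowtie \<tau>' (perm_minus \<sigma> \<tau>)) (i, k) (i', k')))"
proof (intro conjI allI impI)
  show "inv (perm_minus \<sigma> \<tau>) = perm_minus (inv \<sigma>) (inv \<tau>)"
    using part1 assms by blast
  show "perm_minus (perm_minus \<sigma> \<tau>) \<tau>' = perm_minus \<sigma> (\<tau> \<circ> \<tau>')"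
    using part2 assms by blast
  have d': "supp \<tau>' \<inter> supp \<tau> = {}" using assms(5) by blast
  have "perm_minus (perm_minus \<sigma> \<tau>') \<tau> = perm_minus \<sigma> (\<tau>' \<circ> \<tau>)"
    using part2[OF assms(1,2,4,3) d'] .
  then show "perm_minus \<sigma> (\<tau> \<circ> \<tau>') = perm_minus (perm_minus \<sigma> \<tau>') \<tau>"
    using disj_commute[OF assms(3,4,5)] by simp
  fix i k i' k'
  assume "k \<in> S - supp \<tau>" "k' \<in> S - supp \<tau>"
  then show "same_cycle (bowtie (\<tau>' \<circ> \<tau>) \<sigma>) (i, k) (i', k')
            \<longleftrightarrow> same_cycle (bowtie \<tau>' (perm_minus \<sigma> \<tau>)) (i, k) (i', k')"
    using part3[OF assms] by blast
qed

end
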